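(* Let $p$ be a monic real polynomial of degree $4$ all of whose roots lie in $\{z\in\mathbb C:\Re(z)<0\}$, and suppose $p$ has a non-real root $\alpha$. Then $(1/p(n))_{n\in\mathbb Z_+}$ is a Hausdorff moment sequence if and only if $p$ has a real root $r$ with $\Re(\alpha)\le r$.
   Context: A sequence $(x_n)_{n\in\mathbb Z_+}$ of positive numbers is a Hausdorff moment sequence if there is a positive Radon measure $\mu$ on $[0,1]$ with $x_n=\int_0^1 t^n\,d\mu(t)$ for all $n\in\mathbb Z_+$. *)

theory Defs
  imports "HOL-Analysis.Analysis" "HOL-Computational_Algebra.Polynomial"
begin

text \<open>Hausdorff moment sequence: there is a positive finite (hence Radon) Borel measure
  on [0,1] whose moments are the given numbers.\<close>
definition hausdorff_moment_seq :: "(nat \<Rightarrow> real) \<Rightarrow> bool" where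
  "hausdorff_moment_seq x \<longleftrightarrow>
     (\<forall>n. x n > 0) \<and>
     (\<exists>\<mu> :: real measure. sets \<mu> = sets (restrict_space borel {0..1}) \<and> finite_measure \<mu> \<and>
        (\<forall>n. x n = (\<integral>t. t ^ n \<partial>\<mu>)))"

end

theory Submission
  imports Defs "HOL-Probability.Sinc_Integral" "HOL-Real_Asymp.Real_Asymp"
begin


lemma einterval_0_infty: "einterval 0 \<infinity> = {0<..}"
  by (auto simp: einterval_iff zero_ereal_def)

lemma real_exp_lap:
  fixes a :: real assumes a: "0 < a"
  shows "has_bochner_integral lborel (\<lambda>s. indicator {0<..} s *\<^sub>R exp (- (a * s))) (1 / a)"
proof -
  let ?F = "\<lambda>s. - exp (- (a * s)) / a"
  have d: "DERIV ?F x :> exp (- (a * x))" for x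
    using a by (auto intro!: derivative_eq_intros)
  have l0: "((?F \<circ> real_of_ereal) \<longlongrightarrow> (- 1 / a)) (at_right 0)"
    unfolding zero_ereal_def ereal_tendsto_simps
    using a by (auto intro!: tendsto_eq_intros)
  have *: "(?F \<longlongrightarrow> 0) at_top"
    using a by real_asymp
  have l1: "((?F \<circ> real_of_ereal) \<longlongrightarrow> 0) (at_left \<infinity>)"
    unfolding ereal_tendsto_simps using * .
  note r = interval_integral_FTC_nonneg[OF _ d _ _ l0 l1]
  have "set_integrable lborel {0<..} (\<lambda>s. exp (- (a * s)))"
    "(LBINT s=0..\<infinity>. exp (- (a * s))) = 0 - (- 1 / a)"
    using r by (auto simp: einterval_0_infty)
  then show ?thesis
    by (simp add: has_bochner_integral_iff interval_lebesgue_integral_0_infty set_integrable_def set_lebesgue_integral_def)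
qed

lemma real_s_exp_lap:
  fixes a :: real assumes a: "0 < a"
  shows "has_bochner_integral lborel (\<lambda>s. indicator {0<..} s *\<^sub>R (s * exp (- (a * s)))) (1 / a^2)"
proof -
  let ?F = "\<lambda>s. - exp (- (a * s)) * (s / a + 1 / a^2)"
  have d: "DERIV ?F x :> x * exp (- (a * x))" for x
    using a by (auto intro!: derivative_eq_intros simp: field_simps power2_eq_square)
  have l0: "((?F \<circ> real_of_ereal) \<longlongrightarrow> (- 1 / a^2)) (at_right 0)"
    unfolding zero_ereal_def ereal_tendsto_simps
    using a by (auto intro!: tendsto_eq_intros)
  have *: "(?F \<longlongrightarrow> 0) at_top"
    using a by real_asymp
  have l1: "((?F \<circ> real_of_ereal) \<longlongrightarrow> 0) (at_left \<infinity>)"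
    unfolding ereal_tendsto_simps using * .
  note r = interval_integral_FTC_nonneg[OF _ d _ _ l0 l1]
  have "set_integrable lborel {0<..} (\<lambda>s. s * exp (- (a * s)))"
    "(LBINT s=0..\<infinity>. s * exp (- (a * s))) = 0 - (- 1 / a^2)"
    using r by (auto simp: einterval_0_infty einterval_iff)
  then show ?thesis
    by (simp add: has_bochner_integral_iff interval_lebesgue_integral_0_infty set_integrable_def set_lebesgue_integral_def)
qed

lemma cexp_lap:
  fixes w :: complex assumes w: "0 < Re w"
  shows "has_bochner_integral lborel (\<lambda>s. indicator {0<..} s *\<^sub>R exp (- (w * of_real s))) (1 / w)"
proof -
  have w0: "w \<noteq> 0" using w by auto
  have nrm: "norm (exp (- (w * of_real s))) = exp (- (Re w * s))" for s
    by (simp add: norm_exp)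
  have int: "set_integrable lborel (einterval 0 \<infinity>) (\<lambda>s. exp (- (w * of_real s)))"
  proof (rule set_integrable_bound[where f="\<lambda>s. exp (- (Re w * s))"])
    show "set_integrable lborel (einterval 0 \<infinity>) (\<lambda>s. exp (- (Re w * s)))"
      using real_exp_lap[OF w]
      by (simp add: set_integrable_def has_bochner_integral_iff einterval_0_infty)
    show "set_borel_measurable lborel (einterval 0 \<infinity>) (\<lambda>s. exp (- (w * complex_of_real s)))"
      unfolding set_borel_measurable_def by measurable
  qed (auto simp: nrm)
  have "(LBINT s=0..\<infinity>. exp (- (w * of_real s))) = 0 - (- 1 / w)"
  proof (rule interval_integral_FTC_integrable[where F="\<lambda>s. - exp (- (w * of_real s)) / w"])
    show "((\<lambda>s. - exp (- (w * of_real s)) / w) has_vector_derivative exp (- (w * of_real x))) (at x)" for x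
      using w0 by (auto intro!: derivative_eq_intros has_vector_derivative_real_field)
    show "(((\<lambda>s. - exp (- (w * of_real s)) / w) \<circ> real_of_ereal) \<longlongrightarrow> (- 1 / w)) (at_right 0)"
      unfolding zero_ereal_def ereal_tendsto_simps
      using w0 by (auto intro!: tendsto_eq_intros)
    have *: "((\<lambda>t. exp (- (Re w * t))) \<longlongrightarrow> 0) at_top"
      using w by real_asymp
    have "((\<lambda>s. - exp (- (w * of_real s)) / w) \<longlongrightarrow> 0) at_top"
      by (rule tendsto_norm_zero_cancel) (use * w0 in \<open>simp add: norm_divide nrm tendsto_divide_zero\<close>)
    then show "(((\<lambda>s. - exp (- (w * of_real s)) / w) \<circ> real_of_ereal) \<longlongrightarrow> 0) (at_left \<infinity>)"
      unfolding ereal_tendsto_simps .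
  qed (auto simp: int)
  then show ?thesis using int
    by (simp add: has_bochner_integral_iff interval_lebesgue_integral_0_infty set_integrable_def set_lebesgue_integral_def
        einterval_0_infty)
qed

lemma cexp_s_lap:
  fixes w :: complex assumes w: "0 < Re w"
  shows "has_bochner_integral lborel (\<lambda>s. indicator {0<..} s *\<^sub>R (of_real s * exp (- (w * of_real s)))) (1 / w^2)"
proof -
  have w0: "w \<noteq> 0" using w by auto
  have nrm: "norm (of_real s * exp (- (w * of_real s))) = \<bar>s\<bar> * exp (- (Re w * s))" for s
    by (simp add: norm_exp norm_mult)
  have int: "set_integrable lborel (einterval 0 \<infinity>) (\<lambda>s. of_real s * exp (- (w * of_real s)))"
  proof (rule set_integrable_bound[where f="\<lambda>s. s * exp (- (Re w * s))"])
    show "set_integrable lborel (einterval 0 \<infinity>) (\<lambda>s. s * exp (- (Re w * s)))"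
      using real_s_exp_lap[OF w]
      by (simp add: set_integrable_def has_bochner_integral_iff einterval_0_infty)
    show "set_borel_measurable lborel (einterval 0 \<infinity>) (\<lambda>s. of_real s * exp (- (w * complex_of_real s)))"
      unfolding set_borel_measurable_def by measurable
  qed (auto simp: nrm einterval_iff)
  have "(LBINT s=0..\<infinity>. of_real s * exp (- (w * of_real s))) = 0 - (- 1 / w^2)"
  proof (rule interval_integral_FTC_integrable[where F="\<lambda>s. - exp (- (w * of_real s)) * (of_real s / w + 1 / w^2)"])
    show "((\<lambda>s. - exp (- (w * of_real s)) * (of_real s / w + 1 / w^2)) has_vector_derivative (of_real x * exp (- (w * of_real x)))) (at x)" for x
      using w0 by (auto intro!: derivative_eq_intros has_vector_derivative_real_field simp: field_simps power2_eq_square)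
    show "(((\<lambda>s. - exp (- (w * of_real s)) * (of_real s / w + 1 / w^2)) \<circ> real_of_ereal) \<longlongrightarrow> (- 1 / w^2)) (at_right 0)"
      unfolding zero_ereal_def ereal_tendsto_simps
      using w0 by (auto intro!: tendsto_eq_intros)
    have *: "((\<lambda>t. exp (- (Re w * t)) * (\<bar>t\<bar> / norm w + 1 / norm w ^ 2)) \<longlongrightarrow> 0) at_top"
      using w w0 by real_asymp
    have "((\<lambda>s. - exp (- (w * of_real s)) * (of_real s / w + 1 / w^2)) \<longlongrightarrow> 0) at_top"
    proof (rule tendsto_norm_zero_cancel, rule Lim_null_comparison[OF _ *])
      show "\<forall>\<^sub>F x in at_top. norm (norm (- exp (- (w * complex_of_real x)) * (complex_of_real x / w + 1 / w\<^sup>2)))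
         \<le> exp (- (Re w * x)) * (\<bar>x\<bar> / cmod w + 1 / cmod w ^ 2)"
        by (intro always_eventually allI)
          (auto simp: norm_mult norm_exp norm_divide norm_power intro!: mult_left_mono norm_triangle_le)
    qed
    then show "(((\<lambda>s. - exp (- (w * of_real s)) * (of_real s / w + 1 / w^2)) \<circ> real_of_ereal) \<longlongrightarrow> 0) (at_left \<infinity>)"
      unfolding ereal_tendsto_simps .
  qed (auto simp: int)
  then show ?thesis using int
    by (simp add: has_bochner_integral_iff interval_lebesgue_integral_0_infty set_integrable_def set_lebesgue_integral_def
        einterval_0_infty)
qed


definition lap_has :: "(real \<Rightarrow> real) \<Rightarrow> real \<Rightarrow> real \<Rightarrow> bool" where
  "lap_has G k v \<longleftrightarrow> has_bochner_integral lborel (\<lambda>s. indicator {0<..} s * (exp (- (k * s)) * G s)) v"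

lemma lap_has_cong: "(\<And>s. s > 0 \<Longrightarrow> G s = H s) \<Longrightarrow> v = u \<Longrightarrow> lap_has G k v \<Longrightarrow> lap_has H k u"
  unfolding lap_has_def
  by (erule has_bochner_integral_cong[THEN iffD1, rotated -1]) (auto simp: indicator_def)

lemma lap_has_add: "lap_has G k v \<Longrightarrow> lap_has H k u \<Longrightarrow> lap_has (\<lambda>s. G s + H s) k (v + u)"
  unfolding lap_has_def by (drule (1) has_bochner_integral_add) (simp add: algebra_simps)

lemma lap_has_diff: "lap_has G k v \<Longrightarrow> lap_has H k u \<Longrightarrow> lap_has (\<lambda>s. G s - H s) k (v - u)"
  unfolding lap_has_def by (drule (1) has_bochner_integral_diff) (simp add: algebra_simps)

lemma lap_has_cmult: assumes "lap_has G k v" shows "lap_has (\<lambda>s. a * G s) k (a * v)"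
  using has_bochner_integral_mult_right[of a, OF assms[unfolded lap_has_def]] unfolding lap_has_def
  by (simp add: algebra_simps)

lemma hbi_eq: "has_bochner_integral M f x \<Longrightarrow> (\<And>s. f s = g s) \<Longrightarrow> x = y \<Longrightarrow> has_bochner_integral M g y"
proof -
  assume "has_bochner_integral M f x" "\<And>s. f s = g s" "x = y"
  moreover then have "f = g" by (intro ext) auto
  ultimately show ?thesis by simp
qed

lemma lap_has_unique: "lap_has G k v \<Longrightarrow> lap_has G k u \<Longrightarrow> v = u"
  unfolding lap_has_def using has_bochner_integral_eq by blast

lemma lap_ecos_esin:
  fixes c d k :: real assumes ck: "c < k"
  shows "lap_has (\<lambda>s. exp (c * s) * cos (d * s)) k ((k - c) / ((k - c)^2 + d^2))"
    and "lap_has (\<lambda>s. exp (c * s) * sin (d * s)) k (d / ((k - c)^2 + d^2))"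
proof -
  define w where "w = Complex (k - c) (- d)"
  have w: "0 < Re w" using ck by (simp add: w_def)
  note I = cexp_lap[OF w]
  have e: "exp (- (w * of_real s)) = of_real (exp (- (k * s)) * exp (c * s)) * (cos (d * s) + \<i> * sin (d * s))" for s
    by (simp add: w_def complex_eq_iff exp_add[symmetric] Re_exp Im_exp algebra_simps)
  have n: "(k - c)^2 + d^2 \<noteq> 0" using ck by (smt (verit) power2_less_0 zero_less_power2)
  have inv: "1 / w = Complex ((k - c) / ((k - c)^2 + d^2)) (d / ((k - c)^2 + d^2))"
    using n by (simp add: w_def complex_eq_iff Re_divide Im_divide power2_eq_square)
  show "lap_has (\<lambda>s. exp (c * s) * cos (d * s)) k ((k - c) / ((k - c)^2 + d^2))"
    unfolding lap_has_def
    by (rule hbi_eq[OF has_bochner_integral_Re[OF I]])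
       (simp_all add: e inv indicator_def)
  show "lap_has (\<lambda>s. exp (c * s) * sin (d * s)) k (d / ((k - c)^2 + d^2))"
    unfolding lap_has_def
    by (rule hbi_eq[OF has_bochner_integral_Im[OF I]])
       (simp_all add: e inv indicator_def)
qed

lemma lap_secos_sesin:
  fixes c d k :: real assumes ck: "c < k"
  shows "lap_has (\<lambda>s. s * exp (c * s) * cos (d * s)) k (((k - c)^2 - d^2) / ((k - c)^2 + d^2)^2)"
    and "lap_has (\<lambda>s. s * exp (c * s) * sin (d * s)) k (2 * (k - c) * d / ((k - c)^2 + d^2)^2)"
proof -
  define w where "w = Complex (k - c) (- d)"
  have w: "0 < Re w" using ck by (simp add: w_def)
  note I = cexp_s_lap[OF w]
  have e: "of_real s * exp (- (w * of_real s)) = of_real (s * exp (- (k * s)) * exp (c * s)) * (cos (d * s) + \<i> * sin (d * s))" for s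
    by (simp add: w_def complex_eq_iff exp_add[symmetric] Re_exp Im_exp algebra_simps)
  have n: "(k - c)^2 + d^2 \<noteq> 0" using ck by (smt (verit) power2_less_0 zero_less_power2)
  have inv: "1 / w^2 = Complex (((k - c)^2 - d^2) / ((k - c)^2 + d^2)^2) (2 * (k - c) * d / ((k - c)^2 + d^2)^2)"
    using n by (simp add: w_def complex_eq_iff Re_divide Im_divide power2_eq_square field_simps)
  show "lap_has (\<lambda>s. s * exp (c * s) * cos (d * s)) k (((k - c)^2 - d^2) / ((k - c)^2 + d^2)^2)"
    unfolding lap_has_def
    by (rule hbi_eq[OF has_bochner_integral_Re[OF I]])
       (simp_all add: e inv indicator_def)
  show "lap_has (\<lambda>s. s * exp (c * s) * sin (d * s)) k (2 * (k - c) * d / ((k - c)^2 + d^2)^2)"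
    unfolding lap_has_def
    by (rule hbi_eq[OF has_bochner_integral_Im[OF I]])
       (simp_all add: e inv indicator_def)
qed

lemma lap_exp: "c < k \<Longrightarrow> lap_has (\<lambda>s. exp (c * s)) k (1 / (k - c))"
  using lap_ecos_esin(1)[of c k 0] by (simp add: power2_eq_square)

lemma lap_sexp: "c < k \<Longrightarrow> lap_has (\<lambda>s. s * exp (c * s)) k (1 / (k - c)^2)"
  using lap_secos_sesin(1)[of c k 0] by (simp add: power2_eq_square)




lemma space_hm: "sets \<mu> = sets (restrict_space borel {0..1::real}) \<Longrightarrow> space \<mu> = {0..1}"
  using sets_eq_imp_space_eq[of \<mu> "restrict_space borel {0..1::real}"] by (simp add: space_restrict_space)

lemma meas_hm: "sets \<mu> = sets (restrict_space borel {0..1::real}) \<Longrightarrow> f \<in> borel_measurable borel \<Longrightarrow> f \<in> borel_measurable \<mu>"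
proof -
  assume a: "sets \<mu> = sets (restrict_space borel {0..1::real})" "f \<in> borel_measurable borel"
  have "f \<in> borel_measurable (restrict_space borel {0..1::real})"
    by (rule measurable_restrict_space1[OF a(2)])
  then show ?thesis by (subst measurable_cong_sets[OF a(1) refl])
qed

lemma suf:
  fixes G :: "real \<Rightarrow> real" and x :: "nat \<Rightarrow> real"
  assumes Gm: "G \<in> borel_measurable borel"
    and Gnn: "\<And>s. s > 0 \<Longrightarrow> G s \<ge> 0"
    and lap: "\<And>n. lap_has G (real n) (x n)"
    and pos: "\<And>n. x n > 0"
  shows "hausdorff_moment_seq x"
proof -
  define g where "g s = indicator {0<..} s * G s" for s :: real
  have gm[measurable]: "g \<in> borel_measurable borel" unfolding g_def using Gm by measurable
  have gnn: "0 \<le> g s" for s using Gnn by (auto simp: g_def indicator_def)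
  define \<nu> where "\<nu> = density lborel (\<lambda>s. ennreal (g s))"
  define \<phi> where "\<phi> s = exp (- \<bar>s\<bar>)" for s :: real
  have \<phi>m: "\<phi> \<in> measurable \<nu> (restrict_space borel {0..1})"
    unfolding \<nu>_def \<phi>_def
    by (rule measurable_restrict_space2) auto
  define \<mu> where "\<mu> = distr \<nu> (restrict_space borel {0..1}) \<phi>"
  have sets: "sets \<mu> = sets (restrict_space borel {0..1})" by (simp add: \<mu>_def)
  have mom: "(\<integral>t. t ^ n \<partial>\<mu>) = x n" for n
  proof -
    have "(\<integral>t. t ^ n \<partial>\<mu>) = (\<integral>s. \<phi> s ^ n \<partial>\<nu>)"
      unfolding \<mu>_def
      by (rule integral_distr[OF \<phi>m]) (rule measurable_restrict_space1, measurable)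
    also have "\<dots> = (\<integral>s. g s * \<phi> s ^ n \<partial>lborel)"
      unfolding \<nu>_def by (subst integral_density) (auto simp: gnn \<phi>_def)
    also have "\<dots> = (\<integral>s. indicator {0<..} s * (exp (- (real n * s)) * G s) \<partial>lborel)"
      by (rule Bochner_Integration.integral_cong)
         (auto simp: g_def \<phi>_def indicator_def exp_of_nat_mult[symmetric] mult_ac)
    also have "\<dots> = x n" using lap[of n] unfolding lap_has_def by (simp add: has_bochner_integral_iff)
    finally show ?thesis .
  qed
  have fin: "finite_measure \<mu>"
  proof
    have "emeasure \<mu> (space \<mu>) = emeasure \<nu> UNIV"
    proof -
      have "space \<mu> = space (restrict_space borel {0..1::real})" unfolding \<mu>_def by simp
      then have "emeasure \<mu> (space \<mu>) = emeasure \<nu> (\<phi> -` space (restrict_space borel {0..1::real}) \<inter> space \<nu>)"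
        unfolding \<mu>_def by (simp only: emeasure_distr[OF \<phi>m sets.top])
      also have "\<phi> -` space (restrict_space borel {0..1::real}) \<inter> space \<nu> = UNIV"
        by (auto simp: \<nu>_def \<phi>_def space_restrict_space)
      finally show ?thesis .
    qed
    also have "\<dots> = (\<integral>\<^sup>+s. ennreal (g s) \<partial>lborel)"
      unfolding \<nu>_def by (simp add: emeasure_density)
    also have "\<dots> = ennreal (\<integral>s. g s \<partial>lborel)"
    proof (rule nn_integral_eq_integral)
      show "integrable lborel g"
        using lap[of 0] unfolding lap_has_def g_def by (simp add: has_bochner_integral_iff)
    qed (auto simp: gnn)
    finally show "emeasure \<mu> (space \<mu>) \<noteq> \<infinity>" by simp
  qed
  show ?thesis
    unfolding hausdorff_moment_seq_def
    using pos sets fin mom by metis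
qed

lemma prod_hm:
  assumes "hausdorff_moment_seq x" "hausdorff_moment_seq y"
  shows "hausdorff_moment_seq (\<lambda>n. x n * y n)"
proof -
  obtain \<mu>1 where s1: "sets \<mu>1 = sets (restrict_space borel {0..1::real})" and f1: "finite_measure \<mu>1"
    and m1: "\<And>n. x n = (\<integral>t. t ^ n \<partial>\<mu>1)" and p1: "\<And>n. x n > 0"
    using assms(1) unfolding hausdorff_moment_seq_def by blast
  obtain \<mu>2 where s2: "sets \<mu>2 = sets (restrict_space borel {0..1::real})" and f2: "finite_measure \<mu>2"
    and m2: "\<And>n. y n = (\<integral>t. t ^ n \<partial>\<mu>2)" and p2: "\<And>n. y n > 0"
    using assms(2) unfolding hausdorff_moment_seq_def by blast
  interpret F1: finite_measure \<mu>1 by (rule f1)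
  interpret F2: finite_measure \<mu>2 by (rule f2)
  interpret P: pair_sigma_finite \<mu>1 \<mu>2 ..
  have sp1: "space \<mu>1 = {0..1}" by (rule space_hm[OF s1])
  have sp2: "space \<mu>2 = {0..1}" by (rule space_hm[OF s2])
  have id1[measurable]: "(\<lambda>t. t) \<in> borel_measurable \<mu>1" by (rule meas_hm[OF s1]) simp
  have id2[measurable]: "(\<lambda>t. t) \<in> borel_measurable \<mu>2" by (rule meas_hm[OF s2]) simp
  define \<rho> where "\<rho> = (\<lambda>(s::real, t::real). s * t)"
  have \<rho>b[measurable]: "\<rho> \<in> borel_measurable (\<mu>1 \<Otimes>\<^sub>M \<mu>2)"
    unfolding \<rho>_def by measurable
  have \<rho>m: "\<rho> \<in> measurable (\<mu>1 \<Otimes>\<^sub>M \<mu>2) (restrict_space borel {0..1})"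
    by (rule measurable_restrict_space2)
       (auto simp: \<rho>_def space_pair_measure sp1 sp2 mult_le_one)
  define \<mu> where "\<mu> = distr (\<mu>1 \<Otimes>\<^sub>M \<mu>2) (restrict_space borel {0..1}) \<rho>"
  have sets: "sets \<mu> = sets (restrict_space borel {0..1})" by (simp add: \<mu>_def)
  have fin: "finite_measure \<mu>"
    unfolding \<mu>_def
    by (intro finite_measure.finite_measure_distr finite_measure_pair_measure f1 f2 \<rho>m)
  have mom: "(\<integral>t. t ^ n \<partial>\<mu>) = x n * y n" for n
  proof -
    have "(\<integral>t. t ^ n \<partial>\<mu>) = (\<integral>z. \<rho> z ^ n \<partial>(\<mu>1 \<Otimes>\<^sub>M \<mu>2))"
      unfolding \<mu>_def
      by (rule integral_distr[OF \<rho>m]) (rule measurable_restrict_space1, measurable)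
    also have "\<dots> = (\<integral>s. (\<integral>t. (s * t) ^ n \<partial>\<mu>2) \<partial>\<mu>1)"
    proof -
      have int: "integrable (\<mu>1 \<Otimes>\<^sub>M \<mu>2) (\<lambda>(s, t). (s * t) ^ n)"
      proof (rule finite_measure.integrable_const_bound[where B=1])
        show "finite_measure (\<mu>1 \<Otimes>\<^sub>M \<mu>2)" by (intro finite_measure_pair_measure f1 f2)
        show "AE z in \<mu>1 \<Otimes>\<^sub>M \<mu>2. norm ((\<lambda>(s, t). (s * t) ^ n) z) \<le> 1"
          by (intro AE_I2) (auto simp: space_pair_measure sp1 sp2 abs_mult power_mult_distrib intro!: power_le_one mult_le_one)
        show "(\<lambda>(s, t). (s * t) ^ n) \<in> borel_measurable (\<mu>1 \<Otimes>\<^sub>M \<mu>2)" by measurable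
      qed
      show ?thesis
        using P.integral_fst'[OF int] by (simp add: \<rho>_def case_prod_beta')
    qed
    also have "\<dots> = (\<integral>s. s ^ n * y n \<partial>\<mu>1)"
      by (simp add: power_mult_distrib m2)
    also have "\<dots> = x n * y n" by (simp add: m1)
    finally show ?thesis .
  qed
  show ?thesis
    unfolding hausdorff_moment_seq_def
    using p1 p2 sets fin mom by (metis mult_pos_pos)
qed


lemma nec:
  fixes G :: "real \<Rightarrow> real" and x :: "nat \<Rightarrow> real"
  assumes Gc: "continuous_on UNIV G"
    and lap: "\<And>n. lap_has G (real n) (x n)"
    and s0: "s0 > 0" "G s0 < 0"
  shows "\<not> hausdorff_moment_seq x"
proof
  assume "hausdorff_moment_seq x"
  then obtain \<mu> where sets: "sets \<mu> = sets (restrict_space borel {0..1::real})" and fin: "finite_measure \<mu>"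
    and mom: "\<And>n. x n = (\<integral>t. t ^ n \<partial>\<mu>)" and pos: "\<And>n. x n > 0"
    unfolding hausdorff_moment_seq_def by blast
  interpret F: finite_measure \<mu> by (rule fin)
  have sp: "space \<mu> = {0..1}" by (rule space_hm[OF sets])
  have Gm[measurable]: "G \<in> borel_measurable borel"
    using Gc by (rule borel_measurable_continuous_onI)
  have intG: "integrable lborel (\<lambda>s. indicator {0<..} s * G s)"
    using lap[of 0] unfolding lap_has_def by (simp add: has_bochner_integral_iff)
  have Gcont: "isCont G s" for s using Gc by (simp add: continuous_on_eq_continuous_at)
  have "\<forall>\<^sub>F s in at s0. G s < 0"
    using order_tendstoD(2)[OF Gcont[of s0, unfolded isCont_def] s0(2)] .
  then obtain \<eta>0 where \<eta>0: "\<eta>0 > 0" "\<And>s. s \<noteq> s0 \<Longrightarrow> dist s s0 < \<eta>0 \<Longrightarrow> G s < 0"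
    unfolding eventually_at by blast
  define \<eta> where "\<eta> = min \<eta>0 s0"
  have \<eta>: "\<eta> > 0" "\<And>s. \<bar>s - s0\<bar> < \<eta> \<Longrightarrow> G s < 0"
    using \<eta>0 s0 unfolding \<eta>_def by (auto simp: dist_real_def) (metis abs_zero diff_self)
  define t0 where "t0 = exp (- s0)"
  define \<delta> where "\<delta> = min (exp (- (s0 - \<eta>)) - t0) (t0 - exp (- (s0 + \<eta>)))"
  have \<delta>: "\<delta> > 0" using \<eta> by (simp add: \<delta>_def t0_def)
  define \<psi> where "\<psi> t = max 0 (\<delta> - \<bar>t - t0\<bar>)" for t :: real
  have \<psi>c: "continuous_on UNIV \<psi>" unfolding \<psi>_def by (intro continuous_intros)
  have \<psi>nn: "0 \<le> \<psi> t" for t by (simp add: \<psi>_def)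
  have \<psi>le: "\<psi> t \<le> \<delta>" for t using \<delta> by (simp add: \<psi>_def)
  have \<psi>pos: "\<bar>s - s0\<bar> < \<eta>" if "\<psi> (exp (- s)) > 0" for s
  proof -
    have "\<bar>exp (- s) - t0\<bar> < \<delta>" using that by (simp add: \<psi>_def)
    then have a: "exp (- s) < t0 + \<delta>" "t0 - \<delta> < exp (- s)" by (auto simp: abs_less_iff)
    have b: "t0 + \<delta> \<le> exp (- (s0 - \<eta>))" "exp (- (s0 + \<eta>)) \<le> t0 - \<delta>"
      unfolding \<delta>_def by linarith+
    have "exp (- s) < exp (- (s0 - \<eta>))" "exp (- (s0 + \<eta>)) < exp (- s)"
      using a b by linarith+
    then have "- s < - (s0 - \<eta>)" "- (s0 + \<eta>) < - s" by (simp only: exp_less_cancel_iff)+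
    then show ?thesis by auto
  qed
  define h where "h s = \<psi> (exp (- s)) * G s" for s
  have hle: "h s \<le> 0" for s
  proof (cases "\<psi> (exp (- s)) > 0")
    case True then show ?thesis using \<eta>(2)[OF \<psi>pos[OF True]] unfolding h_def
      by (simp add: mult_pos_neg less_imp_le)
  next
    case False then have "\<psi> (exp (- s)) = 0" using \<psi>nn[of "exp (- s)"] by linarith
    then show ?thesis by (simp add: h_def)
  qed
  have hs0: "h s0 < 0" using \<delta> s0 by (simp add: h_def \<psi>_def t0_def mult_pos_neg)
  have hc: "continuous_on UNIV h" unfolding h_def
    by (intro continuous_intros continuous_on_compose2[OF \<psi>c] Gc) auto
  have "\<forall>\<^sub>F s in at s0. h s < h s0 / 2"
  proof -
    have hcs: "isCont h s0" using hc by (simp add: continuous_on_eq_continuous_at)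
    have "h s0 < h s0 / 2" using hs0 by simp
    from order_tendstoD(2)[OF hcs[unfolded isCont_def] this] show ?thesis .
  qed
  then obtain \<rho>0 where \<rho>0: "\<rho>0 > 0" "\<And>s. s \<noteq> s0 \<Longrightarrow> dist s s0 < \<rho>0 \<Longrightarrow> h s < h s0 / 2"
    unfolding eventually_at by blast
  define \<rho> where "\<rho> = min \<rho>0 s0"
  have \<rho>: "\<rho> > 0" "\<rho> \<le> s0" "\<And>s. \<bar>s - s0\<bar> < \<rho> \<Longrightarrow> h s \<le> h s0 / 2"
    using \<rho>0 s0 hs0 unfolding \<rho>_def by (auto simp: dist_real_def) (smt (verit))
  have hm[measurable]: "h \<in> borel_measurable borel" using hc by (rule borel_measurable_continuous_onI)
  have \<psi>m[measurable]: "\<psi> \<in> borel_measurable borel" using \<psi>c by (rule borel_measurable_continuous_onI)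
  have inth: "integrable lborel (\<lambda>s. indicator {0<..} s * h s)"
  proof (rule Bochner_Integration.integrable_bound[OF integrable_mult_right[OF intG, of \<delta>]])
    show "AE s in lborel. norm (indicator {0<..} s * h s) \<le> norm (\<delta> * (indicator {0<..} s * G s))"
      using \<delta> \<psi>nn \<psi>le
      by (intro AE_I2) (auto simp: h_def indicator_def abs_mult intro!: mult_right_mono)
  qed measurable
  define J where "J = (\<integral>s. indicator {0<..} s * h s \<partial>lborel)"
  have J: "J < 0"
  proof -
    have "J \<le> (\<integral>s. indicator {s0 - \<rho>/2 .. s0 + \<rho>/2} s * (h s0 / 2) \<partial>lborel)"
      unfolding J_def
    proof (rule integral_mono[OF inth])
      show "integrable lborel (\<lambda>s. indicator {s0 - \<rho>/2 .. s0 + \<rho>/2} s * (h s0 / 2))"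
        using \<rho> by (intro integrable_mult_left integrable_real_indicator) auto
      fix s
      show "indicator {0<..} s * h s \<le> indicator {s0 - \<rho>/2 .. s0 + \<rho>/2} s * (h s0 / 2)"
        using \<rho>(1,2) \<rho>(3)[of s] hle[of s] by (auto simp: indicator_def)
    qed
    also have "\<dots> = \<rho> * h s0 / 2" using \<rho> by simp
    also have "\<dots> < 0" using \<rho> hs0 by (simp add: mult_pos_neg)
    finally show ?thesis .
  qed
  define A where "A = (\<integral>s. \<bar>indicator {0<..} s * G s\<bar> \<partial>lborel)"
  have A: "A \<ge> 0" unfolding A_def by simp
  have x0: "x 0 > 0" by (rule pos)
  define \<epsilon> where "\<epsilon> = - J / (2 * (x 0 + A))"
  have \<epsilon>: "\<epsilon> > 0" using J A x0 unfolding \<epsilon>_def by (intro divide_pos_pos) auto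
  obtain P where P: "real_polynomial_function P" "\<And>t. t \<in> {0..1} \<Longrightarrow> \<bar>\<psi> t - P t\<bar> < \<epsilon>"
    using Stone_Weierstrass_real_polynomial_function[OF compact_Icc continuous_on_subset[OF \<psi>c] \<epsilon>, of 0 1]
    by auto
  obtain a N where PN: "P = (\<lambda>t. \<Sum>i\<le>N. a i * t ^ i)"
    using real_polynomial_function_imp_sum[OF P(1)] by blast
  have intpow: "integrable \<mu> (\<lambda>t. t ^ i)" for i
  proof (rule F.integrable_const_bound[where B=1])
    show "AE t in \<mu>. norm (t ^ i) \<le> 1"
      by (intro AE_I2) (auto simp: sp abs_le_iff intro!: power_le_one)
  qed (rule meas_hm[OF sets], simp)
  have intP: "integrable \<mu> P" unfolding PN by (rule Bochner_Integration.integrable_sum, rule integrable_mult_right, rule intpow)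
  have intP2: "integrable \<mu> (\<lambda>t. \<psi> t - \<epsilon>)"
  proof (rule F.integrable_const_bound[where B="\<delta> + \<epsilon>"])
    show "AE t in \<mu>. norm (\<psi> t - \<epsilon>) \<le> \<delta> + \<epsilon>"
    proof (rule AE_I2)
      fix t have "0 \<le> \<psi> t" "\<psi> t \<le> \<delta>" using \<psi>nn \<psi>le by auto
      then show "norm (\<psi> t - \<epsilon>) \<le> \<delta> + \<epsilon>" using \<epsilon> by (simp add: abs_le_iff)
    qed
  qed (rule meas_hm[OF sets], simp)
  have mu1: "(\<integral>t. P t \<partial>\<mu>) = (\<Sum>i\<le>N. a i * x i)"
  proof -
    have "(\<integral>t. (\<Sum>i\<le>N. a i * t ^ i) \<partial>\<mu>) = (\<Sum>i\<le>N. \<integral>t. a i * t ^ i \<partial>\<mu>)"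
      by (rule Bochner_Integration.integral_sum) (simp add: intpow)
    then show ?thesis unfolding PN by (simp add: mom)
  qed
  have mu2: "(\<integral>t. P t \<partial>\<mu>) \<ge> - \<epsilon> * x 0"
  proof -
    have "(\<integral>t. \<psi> t - \<epsilon> \<partial>\<mu>) \<le> (\<integral>t. P t \<partial>\<mu>)"
    proof (rule integral_mono_AE[OF intP2 intP])
      show "AE t in \<mu>. \<psi> t - \<epsilon> \<le> P t"
        using P(2) by (intro AE_I2) (force simp: sp abs_less_iff)
    qed
    moreover have "(\<integral>t. \<psi> t - \<epsilon> \<partial>\<mu>) = (\<integral>t. \<psi> t \<partial>\<mu>) - \<epsilon> * x 0"
    proof -
      have "integrable \<mu> \<psi>"
        using Bochner_Integration.integrable_add[OF intP2 F.integrable_const[of \<epsilon>]] by simp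
      moreover have "x 0 = (\<integral>t. 1 \<partial>\<mu>)" using mom[of 0] by simp
      ultimately show ?thesis by (simp add: Bochner_Integration.integral_diff)
    qed
    moreover have "(\<integral>t. \<psi> t \<partial>\<mu>) \<ge> 0" by (simp add: \<psi>nn)
    ultimately show ?thesis by linarith
  qed
  have hb: "has_bochner_integral lborel (\<lambda>s. indicator {0<..} s * (P (exp (- s)) * G s)) (\<Sum>i\<le>N. a i * x i)"
  proof -
    have "has_bochner_integral lborel (\<lambda>s. \<Sum>i\<le>N. a i * (indicator {0<..} s * (exp (- (real i * s)) * G s))) (\<Sum>i\<le>N. a i * x i)"
      using lap unfolding lap_has_def by (intro has_bochner_integral_sum has_bochner_integral_mult_right) auto
    then show ?thesis
      by (rule hbi_eq) (auto simp: PN sum_distrib_left sum_distrib_right mult_ac exp_of_nat_mult[symmetric])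
  qed
  have intPG: "integrable lborel (\<lambda>s. indicator {0<..} s * (P (exp (- s)) * G s))"
    using hb by (simp add: has_bochner_integral_iff)
  have "(\<Sum>i\<le>N. a i * x i) \<le> (\<integral>s. indicator {0<..} s * h s + \<epsilon> * \<bar>indicator {0<..} s * G s\<bar> \<partial>lborel)"
    unfolding has_bochner_integral_integral_eq[OF hb, symmetric]
  proof (rule integral_mono[OF intPG])
    show "integrable lborel (\<lambda>s. indicator {0<..} s * h s + \<epsilon> * \<bar>indicator {0<..} s * G s\<bar>)"
      using inth intG by (intro Bochner_Integration.integrable_add integrable_mult_right integrable_abs)
    fix s
    show "indicator {0<..} s * (P (exp (- s)) * G s) \<le> indicator {0<..} s * h s + \<epsilon> * \<bar>indicator {0<..} s * G s\<bar>"
    proof (cases "s > 0")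
      case True
      have "exp (- s) \<in> {0..1}" using True by auto
      then have "\<bar>\<psi> (exp (- s)) - P (exp (- s))\<bar> < \<epsilon>" by (rule P(2))
      then have "(P (exp (- s)) - \<psi> (exp (- s))) * G s \<le> \<epsilon> * \<bar>G s\<bar>"
      proof -
        have "(P (exp (- s)) - \<psi> (exp (- s))) * G s \<le> \<bar>P (exp (- s)) - \<psi> (exp (- s))\<bar> * \<bar>G s\<bar>"
          by (metis abs_ge_self abs_mult)
        also have "\<dots> \<le> \<epsilon> * \<bar>G s\<bar>"
          using \<open>\<bar>\<psi> (exp (- s)) - P (exp (- s))\<bar> < \<epsilon>\<close> by (intro mult_right_mono) (auto simp: abs_minus_commute)
        finally show ?thesis .
      qed
      then show ?thesis using True by (simp add: h_def algebra_simps)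
    qed simp
  qed
  also have "\<dots> = J + \<epsilon> * A"
    unfolding J_def A_def using inth intG by (simp add: Bochner_Integration.integral_add integrable_abs)
  finally have "- \<epsilon> * x 0 \<le> J + \<epsilon> * A" using mu1 mu2 by linarith
  then have "- (\<epsilon> * (x 0 + A)) \<le> J" by (simp add: algebra_simps)
  moreover have "\<epsilon> * (x 0 + A) = - J / 2" using A x0 by (simp add: \<epsilon>_def field_simps)
  ultimately show False using J by linarith
qed




definition rpmax :: "real \<Rightarrow> real \<Rightarrow> real" where
  "rpmax f e = (if f^2 - 4 * e \<ge> 0 then (- f + sqrt (f^2 - 4 * e)) / 2 else - f / 2)"

lemma aux_b1: fixes a s y :: real assumes "0 \<le> a" "0 \<le> s" "0 \<le> y"
  shows "a * y \<le> a * (1 + s) * y"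
proof -
  have "0 \<le> a * s * y" using assms by simp
  then show ?thesis by (simp add: algebra_simps)
qed

lemma aux_b2: fixes a b s y :: real assumes "0 \<le> a" "0 \<le> b" "0 \<le> s" "0 \<le> y"
  shows "a * y + b * (s * y) \<le> (a + b) * (1 + s) * y"
proof -
  have "0 \<le> a * s * y" "0 \<le> b * y" using assms by simp_all
  then show ?thesis by (simp add: algebra_simps)
qed

lemma abs_trig_bound:
  fixes a x y :: real
  shows "\<bar>a * (exp x * cos y)\<bar> \<le> \<bar>a\<bar> * exp x" "\<bar>a * (exp x * sin y)\<bar> \<le> \<bar>a\<bar> * exp x"
proof -
  have "exp x * \<bar>cos y\<bar> \<le> exp x" "exp x * \<bar>sin y\<bar> \<le> exp x"
    by (simp_all add: mult_left_le)
  then show "\<bar>a * (exp x * cos y)\<bar> \<le> \<bar>a\<bar> * exp x" "\<bar>a * (exp x * sin y)\<bar> \<le> \<bar>a\<bar> * exp x"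
    by (simp_all add: abs_mult mult_left_mono)
qed

lemma QL:
  fixes f e E F :: real
  assumes m: "rpmax f e < 0"
  shows "\<exists>H B. continuous_on UNIV H \<and> (\<forall>s\<ge>0. \<bar>H s\<bar> \<le> B * (1 + s) * exp (rpmax f e * s)) \<and>
     (\<forall>k\<ge>0. lap_has H k ((E * k + F) / (k^2 + f * k + e)))"
proof -
  define D where "D = f^2 - 4 * e"
  consider "D > 0" | "D = 0" | "D < 0" by linarith
  then show ?thesis
  proof cases
    case 1
    define \<rho>1 where "\<rho>1 = (- f - sqrt D) / 2"
    define \<rho>2 where "\<rho>2 = (- f + sqrt D) / 2"
    have m2: "rpmax f e = \<rho>2" using 1 by (simp add: rpmax_def \<rho>2_def D_def)
    have sD: "sqrt D > 0" using 1 by simp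
    have r12: "\<rho>1 < \<rho>2" using sD by (simp add: \<rho>1_def \<rho>2_def)
    have fac: "k^2 + f * k + e = (k - \<rho>1) * (k - \<rho>2)" for k
    proof -
      have "(sqrt D)^2 = D" using 1 by simp
      then show ?thesis by (simp add: \<rho>1_def \<rho>2_def D_def field_simps power2_eq_square, (simp add: algebra_simps)?)
    qed
    define A1 where "A1 = (E * \<rho>1 + F) / (\<rho>1 - \<rho>2)"
    define A2 where "A2 = (E * \<rho>2 + F) / (\<rho>2 - \<rho>1)"
    define H where "H s = A1 * exp (\<rho>1 * s) + A2 * exp (\<rho>2 * s)" for s
    show ?thesis
    proof (intro exI[of _ H] exI[of _ "\<bar>A1\<bar> + \<bar>A2\<bar>"] conjI allI impI)
      show "continuous_on UNIV H" unfolding H_def by (intro continuous_intros)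
      fix s :: real assume s: "s \<ge> 0"
      have e1: "exp (\<rho>1 * s) \<le> exp (\<rho>2 * s)" using r12 s by (simp add: mult_right_mono)
      have "\<bar>H s\<bar> \<le> \<bar>A1\<bar> * exp (\<rho>1 * s) + \<bar>A2\<bar> * exp (\<rho>2 * s)"
        unfolding H_def by (rule order_trans[OF abs_triangle_ineq]) (simp add: abs_mult)
      also have "\<dots> \<le> (\<bar>A1\<bar> + \<bar>A2\<bar>) * exp (\<rho>2 * s)"
        using e1 by (simp add: distrib_right mult_left_mono)
      also have "\<dots> \<le> (\<bar>A1\<bar> + \<bar>A2\<bar>) * (1 + s) * exp (\<rho>2 * s)"
        using s by (intro aux_b1) auto
      finally show "\<bar>H s\<bar> \<le> (\<bar>A1\<bar> + \<bar>A2\<bar>) * (1 + s) * exp (rpmax f e * s)" by (simp add: m2)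
    next
      fix k :: real assume k: "k \<ge> 0"
      have k1: "\<rho>1 < k" "\<rho>2 < k" using m m2 r12 k by linarith+
      have "lap_has H k (A1 * (1 / (k - \<rho>1)) + A2 * (1 / (k - \<rho>2)))"
        unfolding H_def by (intro lap_has_add lap_has_cmult lap_exp k1)
      moreover have "A1 * (1 / (k - \<rho>1)) + A2 * (1 / (k - \<rho>2)) = (E * k + F) / (k^2 + f * k + e)"
      proof -
        have n: "k - \<rho>1 \<noteq> 0" "k - \<rho>2 \<noteq> 0" "\<rho>1 - \<rho>2 \<noteq> 0" "\<rho>2 - \<rho>1 \<noteq> 0" using k1 r12 by auto
        have "A1 * (k - \<rho>2) + A2 * (k - \<rho>1) = E * k + F"
        proof -
          have a1: "A1 * (\<rho>1 - \<rho>2) = E * \<rho>1 + F" unfolding A1_def using n by simp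
          have a2: "A2 * (\<rho>1 - \<rho>2) = - (E * \<rho>2 + F)"
          proof -
            have "A2 * (\<rho>2 - \<rho>1) = E * \<rho>2 + F" unfolding A2_def using n by simp
            then show ?thesis by (simp add: algebra_simps)
          qed
          have "(A1 * (k - \<rho>2) + A2 * (k - \<rho>1)) * (\<rho>1 - \<rho>2) = (A1 * (\<rho>1 - \<rho>2)) * (k - \<rho>2) + (A2 * (\<rho>1 - \<rho>2)) * (k - \<rho>1)"
            by (simp add: algebra_simps)
          also have "\<dots> = (E * k + F) * (\<rho>1 - \<rho>2)" unfolding a1 a2 by (simp add: algebra_simps)
          finally show ?thesis using n(3) by simp
        qed
        then show ?thesis unfolding fac using n by (simp add: field_simps)
      qed
      ultimately show "lap_has H k ((E * k + F) / (k^2 + f * k + e))" by simp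
    qed
  next
    case 2
    define \<rho> where "\<rho> = - f / 2"
    have m2: "rpmax f e = \<rho>" using 2 by (simp add: rpmax_def \<rho>_def D_def)
    have fac: "k^2 + f * k + e = (k - \<rho>)^2" for k
      using 2 by (simp add: \<rho>_def D_def field_simps power2_eq_square, (simp add: algebra_simps)?)
    define H where "H s = E * exp (\<rho> * s) + (E * \<rho> + F) * (s * exp (\<rho> * s))" for s
    show ?thesis
    proof (intro exI[of _ H] exI[of _ "\<bar>E\<bar> + \<bar>E * \<rho> + F\<bar>"] conjI allI impI)
      show "continuous_on UNIV H" unfolding H_def by (intro continuous_intros)
      fix s :: real assume s: "s \<ge> 0"
      have "\<bar>H s\<bar> \<le> \<bar>E\<bar> * exp (\<rho> * s) + \<bar>E * \<rho> + F\<bar> * (s * exp (\<rho> * s))"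
        unfolding H_def using s by (rule_tac order_trans[OF abs_triangle_ineq]) (simp add: abs_mult)
      also have "\<dots> \<le> (\<bar>E\<bar> + \<bar>E * \<rho> + F\<bar>) * (1 + s) * exp (\<rho> * s)"
        using s by (intro aux_b2) auto
      finally show "\<bar>H s\<bar> \<le> (\<bar>E\<bar> + \<bar>E * \<rho> + F\<bar>) * (1 + s) * exp (rpmax f e * s)" by (simp add: m2)
    next
      fix k :: real assume k: "k \<ge> 0"
      have k1: "\<rho> < k" using m m2 k by linarith
      have "lap_has H k (E * (1 / (k - \<rho>)) + (E * \<rho> + F) * (1 / (k - \<rho>)^2))"
        unfolding H_def by (intro lap_has_add lap_has_cmult lap_exp lap_sexp k1)
      moreover have "E * (1 / (k - \<rho>)) + (E * \<rho> + F) * (1 / (k - \<rho>)^2) = (E * k + F) / (k^2 + f * k + e)"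
      proof -
        have n: "k - \<rho> \<noteq> 0" using k1 by simp
        have "E * (1 / (k - \<rho>)) = (E * (k - \<rho>)) / (k - \<rho>)^2" using n by (simp add: power2_eq_square)
        then have "E * (1 / (k - \<rho>)) + (E * \<rho> + F) * (1 / (k - \<rho>)^2) = (E * (k - \<rho>) + (E * \<rho> + F)) / (k - \<rho>)^2"
          by (simp add: add_divide_distrib)
        also have "E * (k - \<rho>) + (E * \<rho> + F) = E * k + F" by (simp add: algebra_simps)
        finally show ?thesis unfolding fac .
      qed
      ultimately show "lap_has H k ((E * k + F) / (k^2 + f * k + e))" by simp
    qed
  next
    case 3
    define c where "c = - f / 2"
    define d where "d = sqrt (- D) / 2"
    have m2: "rpmax f e = c" using 3 by (simp add: rpmax_def c_def D_def)
    have d0: "d > 0" using 3 by (simp add: d_def)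
    have fac: "k^2 + f * k + e = (k - c)^2 + d^2" for k
    proof -
      have "(sqrt (- D))^2 = - D" using 3 by simp
      then show ?thesis by (simp add: c_def d_def D_def field_simps power2_eq_square, (simp add: algebra_simps)?)
    qed
    define H where "H s = E * (exp (c * s) * cos (d * s)) + ((E * c + F) / d) * (exp (c * s) * sin (d * s))" for s
    show ?thesis
    proof (intro exI[of _ H] exI[of _ "\<bar>E\<bar> + \<bar>(E * c + F) / d\<bar>"] conjI allI impI)
      show "continuous_on UNIV H" unfolding H_def by (intro continuous_intros)
      fix s :: real assume s: "s \<ge> 0"
      have "\<bar>H s\<bar> \<le> \<bar>E\<bar> * exp (c * s) + \<bar>(E * c + F) / d\<bar> * exp (c * s)"
        unfolding H_def
        by (rule order_trans[OF abs_triangle_ineq], intro add_mono abs_trig_bound)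
      also have "\<dots> \<le> (\<bar>E\<bar> + \<bar>(E * c + F) / d\<bar>) * (1 + s) * exp (c * s)"
        using s aux_b1[of "\<bar>E\<bar> + \<bar>(E * c + F) / d\<bar>" s "exp (c * s)"] by (simp add: algebra_simps)
      finally show "\<bar>H s\<bar> \<le> (\<bar>E\<bar> + \<bar>(E * c + F) / d\<bar>) * (1 + s) * exp (rpmax f e * s)" by (simp add: m2)
    next
      fix k :: real assume k: "k \<ge> 0"
      have k1: "c < k" using m m2 k by linarith
      have "lap_has H k (E * ((k - c) / ((k - c)^2 + d^2)) + ((E * c + F) / d) * (d / ((k - c)^2 + d^2)))"
        unfolding H_def by (intro lap_has_add lap_has_cmult lap_ecos_esin k1)
      moreover have "E * ((k - c) / ((k - c)^2 + d^2)) + ((E * c + F) / d) * (d / ((k - c)^2 + d^2)) = (E * k + F) / (k^2 + f * k + e)"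
      proof -
        have "((E * c + F) / d) * (d / ((k - c)^2 + d^2)) = (E * c + F) / ((k - c)^2 + d^2)" using d0 by simp
        then have "E * ((k - c) / ((k - c)^2 + d^2)) + ((E * c + F) / d) * (d / ((k - c)^2 + d^2))
           = (E * (k - c) + (E * c + F)) / ((k - c)^2 + d^2)" by (simp add: add_divide_distrib)
        also have "E * (k - c) + (E * c + F) = E * k + F" by (simp add: algebra_simps)
        finally show ?thesis unfolding fac .
      qed
      ultimately show "lap_has H k ((E * k + F) / (k^2 + f * k + e))" by simp
    qed
  qed
qed


lemma sign_neg:
  fixes C D d m c B :: real and H :: "real \<Rightarrow> real"
  assumes d: "d > 0" and CD: "C \<noteq> 0 \<or> D \<noteq> 0" and mc: "m < c"
    and Hb: "\<And>s. s \<ge> 0 \<Longrightarrow> \<bar>H s\<bar> \<le> B * (1 + s) * exp (m * s)"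
  shows "\<exists>s>0. exp (c * s) * (C * cos (d * s) + D * sin (d * s)) + H s < 0"
proof -
  define \<rho> where "\<rho> = sqrt (C^2 + D^2)"
  have \<rho>: "\<rho> > 0" using CD by (auto simp: \<rho>_def add_pos_nonneg add_nonneg_pos)
  have \<rho>2: "\<rho>^2 = C^2 + D^2" by (simp add: \<rho>_def)
  have "(- C / \<rho>)^2 + (- D / \<rho>)^2 = (C^2 + D^2) / \<rho>^2" by (simp add: power_divide add_divide_distrib)
  also have "\<dots> = 1" unfolding \<rho>2[symmetric] using \<rho> by simp
  finally have "(- C / \<rho>)^2 + (- D / \<rho>)^2 = 1" .
  then obtain \<theta> where \<theta>: "0 \<le> \<theta>" "- C / \<rho> = cos \<theta>" "- D / \<rho> = sin \<theta>"
    by (rule sincos_total_2pi) auto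
  have val: "C * cos \<theta> + D * sin \<theta> = - \<rho>"
  proof -
    have "C * cos \<theta> + D * sin \<theta> = - (C^2 + D^2) / \<rho>"
      unfolding \<theta>(2)[symmetric] \<theta>(3)[symmetric] by (simp add: power2_eq_square add_divide_distrib diff_divide_distrib)
    also have "\<dots> = - (\<rho>^2 / \<rho>)" by (simp only: \<rho>2 minus_divide_left)
    also have "\<dots> = - \<rho>" using \<rho> by (simp add: power2_eq_square)
    finally show ?thesis .
  qed
  have lim: "((\<lambda>s. B * (1 + s) * exp (- ((c - m) * s))) \<longlongrightarrow> 0) at_top"
    using mc by real_asymp
  then have "\<forall>\<^sub>F s in at_top. B * (1 + s) * exp (- ((c - m) * s)) < \<rho>"
    using \<rho> by (rule order_tendstoD(2))
  then obtain S where S: "\<And>s. s \<ge> S \<Longrightarrow> B * (1 + s) * exp (- ((c - m) * s)) < \<rho>"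
    unfolding eventually_at_top_linorder by blast
  obtain k :: nat where k: "max S 1 * d / (2 * pi) < real k" using reals_Archimedean2 by blast
  define s where "s = (\<theta> + 2 * real k * pi) / d"
  have "max S 1 * d < 2 * real k * pi" using k pi_gt_zero by (simp add: field_simps)
  moreover have ds: "d * s = \<theta> + 2 * real k * pi" using d by (simp add: s_def)
  ultimately have "d * max S 1 < d * s" using \<theta> by (simp add: mult.commute)
  then have sS: "max S 1 < s" using d by simp
  have s0: "s > 0" using sS by linarith
  have cs: "cos (d * s) = cos \<theta>" "sin (d * s) = sin \<theta>"
    unfolding ds by (simp_all add: cos_add sin_add)
  have "exp (c * s) * (C * cos (d * s) + D * sin (d * s)) + H s \<le> exp (c * s) * (- \<rho>) + B * (1 + s) * exp (m * s)"
    using Hb[of s] s0 unfolding cs val by simp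
  also have "B * (1 + s) * exp (m * s) = exp (c * s) * (B * (1 + s) * exp (- ((c - m) * s)))"
    by (simp add: exp_add[symmetric] algebra_simps)
  also have "exp (c * s) * (- \<rho>) + exp (c * s) * (B * (1 + s) * exp (- ((c - m) * s))) < 0"
    using S[of s] sS by (simp add: distrib_left[symmetric] mult_pos_neg)
  finally show ?thesis using s0 by blast
qed

lemma rpmax_pos:
  fixes f e k :: real
  assumes "rpmax f e < 0" "k \<ge> 0"
  shows "k^2 + f * k + e > 0"
proof (cases "f^2 - 4 * e \<ge> 0")
  case True
  note T = this
  define \<rho>1 where "\<rho>1 = (- f - sqrt (f^2 - 4 * e)) / 2"
  define \<rho>2 where "\<rho>2 = (- f + sqrt (f^2 - 4 * e)) / 2"
  have "\<rho>2 < 0" using assms T by (simp add: rpmax_def \<rho>2_def)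
  moreover have "\<rho>1 \<le> \<rho>2" using T by (simp add: \<rho>1_def \<rho>2_def)
  moreover have "k^2 + f * k + e = (k - \<rho>1) * (k - \<rho>2)"
  proof -
    have "(sqrt (f^2 - 4 * e))^2 = f^2 - 4 * e" using T by simp
    then show ?thesis by (simp add: \<rho>1_def \<rho>2_def field_simps power2_eq_square, (simp add: algebra_simps)?)
  qed
  ultimately show ?thesis using assms(2) by (simp add: mult_pos_pos)
next
  case False
  have "k^2 + f * k + e = (k + f / 2)^2 + (e - f^2 / 4)" by (simp add: power2_eq_square field_simps)
  moreover have "(k + f / 2)^2 \<ge> 0" by simp
  ultimately show ?thesis using False by linarith
qed

lemma gen_nec:
  fixes c d e f :: real
  assumes c: "c < 0" and d: "d > 0" and m: "rpmax f e < c"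
  shows "\<not> hausdorff_moment_seq (\<lambda>n. 1 / (((real n - c)^2 + d^2) * ((real n)^2 + f * real n + e)))"
proof -
  have m0: "rpmax f e < 0" using m c by linarith
  define a where "a = c^2 + f * c + e - d^2"
  define b where "b = 2 * c + f"
  define \<Delta> where "\<Delta> = a^2 + b^2 * d^2"
  have \<Delta>: "\<Delta> \<noteq> 0"
  proof
    assume D0: "\<Delta> = 0"
    have "a^2 \<ge> 0" "b^2 * d^2 \<ge> 0" by simp_all
    then have "a^2 = 0" "b^2 * d^2 = 0" using D0 unfolding \<Delta>_def by linarith+
    then have a0: "a = 0" and b0: "b = 0" using d by auto
    from b0 have f: "f = - 2 * c" unfolding b_def by linarith
    from a0 have "e = d^2 - c^2 - f * c" unfolding a_def by linarith
    with f have e: "e = c^2 + d^2" by (simp add: power2_eq_square)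
    have "f^2 - 4 * e = - 4 * d^2" unfolding f e by (simp add: power2_eq_square)
    then have "f^2 - 4 * e < 0" using d by simp
    then have "rpmax f e = c" unfolding rpmax_def using f by simp
    then show False using m by simp
  qed
  define C where "C = - b / \<Delta>"
  define D where "D = a / \<Delta>"
  define E where "E = b / \<Delta>"
  define F where "F = (b * b - a - b * c) / \<Delta>"
  have CD: "C \<noteq> 0 \<or> D / d \<noteq> 0"
  proof (rule ccontr)
    assume "\<not> (C \<noteq> 0 \<or> D / d \<noteq> 0)"
    then have "b = 0" "a = 0" using \<Delta> d unfolding C_def D_def by auto
    then show False using \<Delta> unfolding \<Delta>_def by simp
  qed
  from QL[OF m0, of E F] obtain H B where HH: "continuous_on UNIV H \<and> (\<forall>s\<ge>0. \<bar>H s\<bar> \<le> B * (1 + s) * exp (rpmax f e * s)) \<and>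
     (\<forall>k\<ge>0. lap_has H k ((E * k + F) / (k^2 + f * k + e)))" by (elim exE)
  have Hc: "continuous_on UNIV H" using HH by blast
  have Hb: "\<And>s. s \<ge> 0 \<Longrightarrow> \<bar>H s\<bar> \<le> B * (1 + s) * exp (rpmax f e * s)" using HH by blast
  have Hl: "\<And>k. k \<ge> 0 \<Longrightarrow> lap_has H k ((E * k + F) / (k^2 + f * k + e))" using HH by blast
  define G where "G s = exp (c * s) * (C * cos (d * s) + (D / d) * sin (d * s)) + H s" for s
  have idt: "1 / (((k - c)^2 + d^2) * (k^2 + f * k + e)) = (C * (k - c) + D) / ((k - c)^2 + d^2) + (E * k + F) / (k^2 + f * k + e)"
    if k: "k \<ge> 0" for k
  proof -
    have q1: "(k - c)^2 + d^2 > 0" using d by (simp add: add_nonneg_pos)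
    have q2: "k^2 + f * k + e > 0" by (rule rpmax_pos[OF m0 k])
    have poly: "(a - b * (k - c)) * (k^2 + f * k + e) + (b * k + (b * b - a - b * c)) * ((k - c)^2 + d^2) = \<Delta>"
      unfolding a_def b_def \<Delta>_def by algebra
    have "(C * (k - c) + D) * (k^2 + f * k + e) + (E * k + F) * ((k - c)^2 + d^2) = 1"
    proof -
      have "(C * (k - c) + D) * (k^2 + f * k + e) + (E * k + F) * ((k - c)^2 + d^2)
         = ((a - b * (k - c)) * (k^2 + f * k + e) + (b * k + (b * b - a - b * c)) * ((k - c)^2 + d^2)) / \<Delta>"
      proof -
        have h1: "C * (k - c) + D = (a - b * (k - c)) / \<Delta>" unfolding C_def D_def by (simp add: diff_divide_distrib add_divide_distrib)
        have h2: "E * k + F = (b * k + (b * b - a - b * c)) / \<Delta>" unfolding E_def F_def by (simp add: add_divide_distrib)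
        show ?thesis unfolding h1 h2 by (simp only: times_divide_eq_left add_divide_distrib[symmetric])
      qed
      then show ?thesis using poly \<Delta> by simp
    qed
    then have "1 / (((k - c)^2 + d^2) * (k^2 + f * k + e)) =
       ((C * (k - c) + D) * (k^2 + f * k + e) + (E * k + F) * ((k - c)^2 + d^2)) / (((k - c)^2 + d^2) * (k^2 + f * k + e))"
      by simp
    also have "\<dots> = ((C * (k - c) + D) * (k^2 + f * k + e)) / (((k - c)^2 + d^2) * (k^2 + f * k + e))
        + ((E * k + F) * ((k - c)^2 + d^2)) / ((k^2 + f * k + e) * ((k - c)^2 + d^2))"
      by (simp add: add_divide_distrib mult.commute)
    also have "\<dots> = (C * (k - c) + D) / ((k - c)^2 + d^2) + (E * k + F) / (k^2 + f * k + e)"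
      using q1 q2 by (simp only: mult_divide_mult_cancel_right less_irrefl)
    finally show ?thesis .
  qed
  have lapG: "lap_has G (real n) (1 / (((real n - c)^2 + d^2) * ((real n)^2 + f * real n + e)))" for n
  proof -
    have k: "c < real n" using c by linarith
    have "lap_has (\<lambda>s. C * (exp (c * s) * cos (d * s)) + (D / d) * (exp (c * s) * sin (d * s)) + H s) (real n)
       (C * ((real n - c) / ((real n - c)^2 + d^2)) + (D / d) * (d / ((real n - c)^2 + d^2)) + (E * real n + F) / ((real n)^2 + f * real n + e))"
      using lap_has_add[OF lap_has_add[OF lap_has_cmult[OF lap_ecos_esin(1)[OF k, of d], of C] lap_has_cmult[OF lap_ecos_esin(2)[OF k, of d], of "D / d"]] Hl[of "real n"]]
      by simp
    then show ?thesis
    proof (rule lap_has_cong[rotated 2])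
      show "C * (exp (c * s) * cos (d * s)) + D / d * (exp (c * s) * sin (d * s)) + H s = G s" for s
        unfolding G_def by (simp add: algebra_simps)
      have "(D / d) * (d / ((real n - c)^2 + d^2)) = D / ((real n - c)^2 + d^2)" using d by simp
      then show "C * ((real n - c) / ((real n - c)^2 + d^2)) + D / d * (d / ((real n - c)^2 + d^2)) + (E * real n + F) / ((real n)^2 + f * real n + e)
          = 1 / (((real n - c)^2 + d^2) * ((real n)^2 + f * real n + e))"
        using idt[of "real n"] by (simp add: add_divide_distrib)
    qed
  qed
  have Gc: "continuous_on UNIV G" unfolding G_def by (intro continuous_intros Hc)
  obtain s0 where s0: "s0 > 0" "G s0 < 0"
    using sign_neg[OF d CD m Hb] unfolding G_def by blast
  show ?thesis by (rule nec[OF Gc lapG s0])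
qed




lemma div_div_self: "(x::real) \<noteq> 0 \<Longrightarrow> x / y / x = 1 / y"
  by (cases "y = 0") (simp_all add: divide_divide_eq_left)

lemma nec_iv:
  fixes c a b :: real
  assumes c: "c < 0" and a: "0 < a" and ab: "a < b"
  shows "\<not> hausdorff_moment_seq (\<lambda>n. 1 / (((real n - c)^2 + a^2) * ((real n - c)^2 + b^2)))"
proof -
  have b: "b > 0" using a ab by linarith
  have ba: "b^2 - a^2 > 0" using a ab by (simp add: power_strict_mono)
  define K1 where "K1 = 1 / (a * (b^2 - a^2))"
  define K2 where "K2 = 1 / (b * (b^2 - a^2))"
  define G where "G s = K1 * (exp (c * s) * sin (a * s)) - K2 * (exp (c * s) * sin (b * s))" for s
  have Gc: "continuous_on UNIV G" unfolding G_def by (intro continuous_intros)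
  have lapG: "lap_has G (real n) (1 / (((real n - c)^2 + a^2) * ((real n - c)^2 + b^2)))" for n
  proof -
    have k: "c < real n" using c by linarith
    have L: "lap_has G (real n) (K1 * (a / ((real n - c)^2 + a^2)) - K2 * (b / ((real n - c)^2 + b^2)))"
      unfolding G_def
      by (rule lap_has_diff[OF lap_has_cmult[OF lap_ecos_esin(2)[OF k]] lap_has_cmult[OF lap_ecos_esin(2)[OF k]]])
    define Qa where "Qa = (real n - c)^2 + a^2"
    define Qb where "Qb = (real n - c)^2 + b^2"
    have Qa: "Qa > 0" using a by (simp add: Qa_def add_nonneg_pos)
    have Qb: "Qb > 0" using b by (simp add: Qb_def add_nonneg_pos)
    have "K1 * (a / Qa) - K2 * (b / Qb) = (1 / Qa - 1 / Qb) / (b^2 - a^2)"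
      unfolding K1_def K2_def using a b ba by (simp add: diff_divide_distrib mult.commute)
    also have "1 / Qa - 1 / Qb = (Qb - Qa) / (Qa * Qb)" using Qa Qb by (simp add: diff_divide_distrib)
    also have "Qb - Qa = b^2 - a^2" by (simp add: Qa_def Qb_def)
    also have "(b^2 - a^2) / (Qa * Qb) / (b^2 - a^2) = 1 / (Qa * Qb)" using ba by simp
    finally show ?thesis using L unfolding Qa_def Qb_def by simp
  qed
  define k0 :: nat where "k0 = nat \<lfloor>b / a\<rfloor> + 1"
  have k0a: "b / a < real k0" unfolding k0_def by linarith
  have k0b: "real k0 \<le> b / a + 1" unfolding k0_def
    using of_nat_floor[of "b / a"] a b by (simp add: less_imp_le)
  define s where "s = real k0 * pi / b"
  have s0: "s > 0" using b unfolding s_def k0_def by simp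
  have sb: "sin (b * s) = 0" using b unfolding s_def by simp
  have as1: "pi < a * s"
  proof -
    have "b < real k0 * a" using k0a a by (simp add: field_simps)
    then have "b * pi < real k0 * a * pi" using pi_gt_zero by simp
    then show ?thesis using b unfolding s_def by (simp add: field_simps)
  qed
  have as2: "a * s < 2 * pi"
  proof -
    have "real k0 * a \<le> b + a" using k0b a by (simp add: field_simps)
    also have "\<dots> < 2 * b" using ab by simp
    finally have "real k0 * a * pi < 2 * b * pi" using pi_gt_zero by simp
    then show ?thesis using b unfolding s_def by (simp add: field_simps)
  qed
  have "sin (a * s) < 0" by (rule sin_lt_zero[OF as1 as2])
  moreover have "K1 > 0" unfolding K1_def using a ba by simp
  ultimately have "G s < 0" unfolding G_def sb by (simp add: mult_pos_neg)
  then show ?thesis using nec[OF Gc lapG s0] by blast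
qed

lemma nec_v:
  fixes c d :: real
  assumes c: "c < 0" and d: "0 < d"
  shows "\<not> hausdorff_moment_seq (\<lambda>n. 1 / (((real n - c)^2 + d^2) * ((real n - c)^2 + d^2)))"
proof -
  define K where "K = 1 / (2 * d^3)"
  define G where "G s = K * (exp (c * s) * sin (d * s)) - (K * d) * (s * exp (c * s) * cos (d * s))" for s
  have Gc: "continuous_on UNIV G" unfolding G_def by (intro continuous_intros)
  have lapG: "lap_has G (real n) (1 / (((real n - c)^2 + d^2) * ((real n - c)^2 + d^2)))" for n
  proof -
    have k: "c < real n" using c by linarith
    have L: "lap_has G (real n) (K * (d / ((real n - c)^2 + d^2)) - (K * d) * (((real n - c)^2 - d^2) / ((real n - c)^2 + d^2)^2))"
      unfolding G_def
      by (rule lap_has_diff[OF lap_has_cmult[OF lap_ecos_esin(2)[OF k]] lap_has_cmult[OF lap_secos_sesin(1)[OF k]]])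
    define Q where "Q = (real n - c)^2 + d^2"
    have Q: "Q > 0" using d by (simp add: Q_def add_nonneg_pos)
    have A: "(K * (d / Q)) * (Q * Q) = K * d * Q" using Q by (simp add: power2_eq_square)
    have B: "((K * d) * (((real n - c)^2 - d^2) / Q^2)) * (Q * Q) = K * d * ((real n - c)^2 - d^2)"
      using Q by (simp add: power2_eq_square)
    have "(K * (d / Q) - (K * d) * (((real n - c)^2 - d^2) / Q^2)) * (Q * Q) = K * d * Q - K * d * ((real n - c)^2 - d^2)"
      unfolding left_diff_distrib A B ..
    also have "\<dots> = K * (2 * d^3)" unfolding Q_def by (simp add: power2_eq_square power3_eq_cube algebra_simps)
    also have "\<dots> = 1" using d by (simp add: K_def)
    finally have "K * (d / Q) - (K * d) * (((real n - c)^2 - d^2) / Q^2) = 1 / (Q * Q)"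
      using Q by (simp add: eq_divide_eq)
    then show ?thesis using L unfolding Q_def by simp
  qed
  define s where "s = 2 * pi / d"
  have s0: "s > 0" using d by (simp add: s_def)
  have ds: "d * s = 2 * pi" using d by (simp add: s_def)
  have K: "K > 0" using d by (simp add: K_def)
  have "G s = - (K * d * s * exp (c * s))" unfolding G_def ds by simp
  also have "\<dots> < 0" using K d s0 by simp
  finally show ?thesis using nec[OF Gc lapG s0] by blast
qed

lemma suf_case:
  fixes r1 r2 c d :: real
  assumes r: "r1 \<le> r2" "r2 < 0" and cr: "c \<le> r2" and d: "d > 0"
  shows "hausdorff_moment_seq (\<lambda>n. 1 / ((real n - r1) * (real n - r2) * ((real n - c)^2 + d^2)))"
proof -
  have h1: "hausdorff_moment_seq (\<lambda>n. 1 / (real n - r1))"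
  proof (rule suf[where G="\<lambda>s. exp (r1 * s)"])
    show "(\<lambda>s. exp (r1 * s)) \<in> borel_measurable borel" by measurable
    show "lap_has (\<lambda>s. exp (r1 * s)) (real n) (1 / (real n - r1))" for n
      using r by (intro lap_exp) linarith
    show "1 / (real n - r1) > 0" for n using r by simp
  qed simp
  define b where "b = r2 - c"
  have b: "b \<ge> 0" using cr by (simp add: b_def)
  define K where "K s = (d * exp (r2 * s) - exp (c * s) * (b * sin (d * s) + d * cos (d * s))) / (d * (b^2 + d^2))" for s
  have bd: "b^2 + d^2 > 0" using d by (simp add: add_nonneg_pos)
  have h2: "hausdorff_moment_seq (\<lambda>n. 1 / ((real n - r2) * ((real n - c)^2 + d^2)))"
  proof (rule suf[where G=K])
    show "K \<in> borel_measurable borel" unfolding K_def by measurable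
    show "K s \<ge> 0" if s: "s > 0" for s
    proof -
      have "b * sin (d * s) \<le> b * (d * s)" using b s d by (intro mult_left_mono sin_x_le_x) auto
      moreover have "d * cos (d * s) \<le> d" using d by simp
      moreover have "d * (1 + b * s) \<le> d * exp (b * s)" using d by (intro mult_left_mono) auto
      ultimately have "b * sin (d * s) + d * cos (d * s) \<le> d * exp (b * s)" by (simp add: algebra_simps)
      then have "exp (c * s) * (b * sin (d * s) + d * cos (d * s)) \<le> exp (c * s) * (d * exp (b * s))"
        by (intro mult_left_mono) auto
      also have "\<dots> = d * exp (r2 * s)" by (simp add: b_def exp_add[symmetric] algebra_simps)
      finally show ?thesis unfolding K_def using d bd by (intro divide_nonneg_pos) auto
    qed
    show "lap_has K (real n) (1 / ((real n - r2) * ((real n - c)^2 + d^2)))" for n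
    proof -
      have k: "r2 < real n" "c < real n" using r cr by linarith+
      define Q where "Q = (real n - c)^2 + d^2"
      have Q: "Q > 0" using d by (simp add: Q_def add_nonneg_pos)
      have kr: "real n - r2 > 0" using k by simp
      have L: "lap_has (\<lambda>s. (1 / (d * (b^2 + d^2))) * (d * exp (r2 * s)) - (1 / (d * (b^2 + d^2))) * (b * (exp (c * s) * sin (d * s)) + d * (exp (c * s) * cos (d * s)))) (real n)
          ((1 / (d * (b^2 + d^2))) * (d * (1 / (real n - r2))) - (1 / (d * (b^2 + d^2))) * (b * (d / Q) + d * ((real n - c) / Q)))"
        unfolding Q_def
        by (intro lap_has_diff lap_has_cmult lap_has_add lap_exp lap_ecos_esin k)
      show ?thesis
      proof (rule lap_has_cong[OF _ _ L])
        show "1 / (d * (b^2 + d^2)) * (d * exp (r2 * s)) - 1 / (d * (b^2 + d^2)) * (b * (exp (c * s) * sin (d * s)) + d * (exp (c * s) * cos (d * s))) = K s" for s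
          unfolding K_def by (simp add: diff_divide_distrib add_divide_distrib algebra_simps)
        have "(1 / (d * (b^2 + d^2))) * (d * (1 / (real n - r2))) - (1 / (d * (b^2 + d^2))) * (b * (d / Q) + d * ((real n - c) / Q))
            = (1 / (real n - r2) - (b + (real n - c)) / Q) / (b^2 + d^2)"
        proof -
          have m1: "(1 / (d * (b^2 + d^2))) * (d * z) = z / (b^2 + d^2)" for z using d by simp
          have m2: "b * (d / Q) + d * ((real n - c) / Q) = d * ((b + (real n - c)) / Q)"
            by (simp only: times_divide_eq_right add_divide_distrib[symmetric] distrib_left mult.commute)
          show ?thesis unfolding m2 m1 by (simp add: diff_divide_distrib)
        qed
        also have "1 / (real n - r2) - (b + (real n - c)) / Q = (Q - (real n - r2) * (b + (real n - c))) / ((real n - r2) * Q)"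
          using kr Q by (simp add: field_simps)
        also have "Q - (real n - r2) * (b + (real n - c)) = b^2 + d^2"
          unfolding Q_def b_def by algebra
        also have "(b^2 + d^2) / ((real n - r2) * Q) / (b^2 + d^2) = 1 / ((real n - r2) * Q)" using bd by (intro div_div_self) linarith
        finally show "(1 / (d * (b^2 + d^2))) * (d * (1 / (real n - r2))) - (1 / (d * (b^2 + d^2))) * (b * (d / Q) + d * ((real n - c) / Q))
            = 1 / ((real n - r2) * ((real n - c)^2 + d^2))" unfolding Q_def .
      qed
    qed
    show "1 / ((real n - r2) * ((real n - c)^2 + d^2)) > 0" for n
      using r d by (intro divide_pos_pos mult_pos_pos) (auto simp: add_nonneg_pos)
  qed
  have "hausdorff_moment_seq (\<lambda>n. 1 / (real n - r1) * (1 / ((real n - r2) * ((real n - c)^2 + d^2))))"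
    by (rule prod_hm[OF h1 h2])
  then show ?thesis by (simp add: mult.assoc)
qed




lemma poly4_sum:
  fixes p :: "real poly"
  assumes "degree p = 4"
  shows "poly (map_poly complex_of_real p) z = (\<Sum>i\<le>4. of_real (coeff p i) * z ^ i)"
    and "poly p x = (\<Sum>i\<le>4. coeff p i * x ^ i)"
proof -
  have "degree (map_poly complex_of_real p) = 4" using assms by (subst degree_map_poly) auto
  then show "poly (map_poly complex_of_real p) z = (\<Sum>i\<le>4. of_real (coeff p i) * z ^ i)"
    by (simp add: poly_altdef coeff_map_poly)
  show "poly p x = (\<Sum>i\<le>4. coeff p i * x ^ i)" using assms by (simp add: poly_altdef)
qed

lemma factor4:
  fixes p :: "real poly" and \<alpha> :: complex
  assumes deg: "degree p = 4" and lc: "lead_coeff p = 1"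
    and root: "poly (map_poly complex_of_real p) \<alpha> = 0" and im: "Im \<alpha> \<noteq> 0"
  obtains f e :: real where
    "\<And>z. poly (map_poly complex_of_real p) z = (z^2 - 2 * of_real (Re \<alpha>) * z + of_real ((Re \<alpha>)^2 + (Im \<alpha>)^2)) * (z^2 + of_real f * z + of_real e)"
    "\<And>x. poly p x = ((x - Re \<alpha>)^2 + (Im \<alpha>)^2) * (x^2 + f * x + e)"
proof -
  define c where "c = Re \<alpha>"
  define d where "d = Im \<alpha>"
  define N where "N = c^2 + d^2"
  define P where "P = coeff p"
  have P4: "P 4 = 1" using lc deg by (simp add: P_def)
  then have P4': "P (Suc (Suc (Suc (Suc 0)))) = 1" by (simp add: numeral_eq_Suc)
  define f where "f = P 3 + 2 * c"
  define e where "e = P 2 - N + 2 * c * f"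
  define R1 where "R1 = P 1 - (N * f - 2 * c * e)"
  define R0 where "R0 = P 0 - N * e"
  have idc: "poly (map_poly complex_of_real p) z = (z^2 - 2 * of_real c * z + of_real N) * (z^2 + of_real f * z + of_real e) + of_real R1 * z + of_real R0" for z
  proof -
    have "poly (map_poly complex_of_real p) z = (\<Sum>i\<le>4. of_real (P i) * z ^ i)"
      unfolding P_def by (rule poly4_sum(1)[OF deg])
    also have "\<dots> = of_real (P 0) + of_real (P 1) * z + of_real (P 2) * z^2 + of_real (P 3) * z^3 + z^4"
      by (simp add: numeral_eq_Suc P4' atMost_Suc)
    also have "\<dots> = (z^2 - 2 * of_real c * z + of_real N) * (z^2 + of_real f * z + of_real e) + of_real R1 * z + of_real R0"
      unfolding R1_def R0_def e_def f_def by (simp add: algebra_simps power2_eq_square power3_eq_cube power4_eq_xxxx)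
    finally show ?thesis .
  qed
  have idr: "poly p x = (x^2 - 2 * c * x + N) * (x^2 + f * x + e) + R1 * x + R0" for x
  proof -
    have "poly p x = (\<Sum>i\<le>4. P i * x ^ i)"
      unfolding P_def by (rule poly4_sum(2)[OF deg])
    also have "\<dots> = P 0 + P 1 * x + P 2 * x^2 + P 3 * x^3 + x^4"
      by (simp add: numeral_eq_Suc P4' atMost_Suc)
    also have "\<dots> = (x^2 - 2 * c * x + N) * (x^2 + f * x + e) + R1 * x + R0"
      unfolding R1_def R0_def e_def f_def by (simp add: algebra_simps power2_eq_square power3_eq_cube power4_eq_xxxx)
    finally show ?thesis .
  qed
  have qa: "\<alpha>^2 - 2 * of_real c * \<alpha> + of_real N = 0"
    by (simp add: complex_eq_iff c_def d_def N_def power2_eq_square algebra_simps)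
  have "of_real R1 * \<alpha> + of_real R0 = 0" using root idc[of \<alpha>] qa by simp
  then have "R1 * d = 0" "R1 * c + R0 = 0" by (simp_all add: complex_eq_iff c_def d_def)
  then have R: "R1 = 0" "R0 = 0" using im by (simp_all add: d_def)
  show ?thesis
  proof (rule that)
    show "poly (map_poly complex_of_real p) z = (z^2 - 2 * of_real (Re \<alpha>) * z + of_real ((Re \<alpha>)^2 + (Im \<alpha>)^2)) * (z^2 + of_real f * z + of_real e)" for z
      using idc[of z] R by (simp add: c_def d_def N_def)
    show "poly p x = ((x - Re \<alpha>)^2 + (Im \<alpha>)^2) * (x^2 + f * x + e)" for x
      using idr[of x] R by (simp add: c_def d_def N_def power2_eq_square algebra_simps)
  qed
qed


theorem mainTheorem8:
  fixes p :: "real poly" and \<alpha> :: complex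
  assumes "degree p = 4"
    and "lead_coeff p = 1"
    and "\<forall>z. poly (map_poly complex_of_real p) z = 0 \<longrightarrow> Re z < 0"
    and "poly (map_poly complex_of_real p) \<alpha> = 0"
    and "Im \<alpha> \<noteq> 0"
  shows "hausdorff_moment_seq (\<lambda>n. 1 / poly p (real n)) \<longleftrightarrow>
         (\<exists>r::real. poly p r = 0 \<and> Re \<alpha> \<le> r)"
proof -
  obtain f e :: real where fc: "\<And>z. poly (map_poly complex_of_real p) z = (z^2 - 2 * of_real (Re \<alpha>) * z + of_real ((Re \<alpha>)^2 + (Im \<alpha>)^2)) * (z^2 + of_real f * z + of_real e)"
    and fr: "\<And>x. poly p x = ((x - Re \<alpha>)^2 + (Im \<alpha>)^2) * (x^2 + f * x + e)"
    using factor4[OF assms(1,2,4,5)] by blast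
  define c where "c = Re \<alpha>"
  define d where "d = \<bar>Im \<alpha>\<bar>"
  have d: "d > 0" using assms(5) by (simp add: d_def)
  have c0: "c < 0" using assms(3,4) by (simp add: c_def)
  have fr': "poly p x = ((x - c)^2 + d^2) * (x^2 + f * x + e)" for x
    using fr[of x] by (simp add: c_def d_def)
  have qpos: "(x - c)^2 + d^2 > 0" for x using d by (simp add: add_nonneg_pos)
  have rootq: "Re z < 0" if "z^2 + of_real f * z + of_real e = 0" for z
    using assms(3) fc[of z] that by simp
  have seq: "(\<lambda>n. 1 / poly p (real n)) = (\<lambda>n. 1 / (((real n - c)^2 + d^2) * ((real n)^2 + f * real n + e)))"
    by (simp add: fr')
  define D where "D = f^2 - 4 * e"
  consider "D \<ge> 0" | "D < 0" by linarith
  then show ?thesis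
  proof cases
    case 1
    define r1 where "r1 = (- f - sqrt D) / 2"
    define r2 where "r2 = (- f + sqrt D) / 2"
    have r12: "r1 \<le> r2" using 1 by (simp add: r1_def r2_def)
    have fac: "x^2 + f * x + e = (x - r1) * (x - r2)" for x
    proof -
      have "(sqrt D)^2 = D" using 1 by simp
      then show ?thesis by (simp add: r1_def r2_def D_def field_simps power2_eq_square, (simp add: algebra_simps)?)
    qed
    have r2neg: "r2 < 0"
    proof -
      have "(complex_of_real r2)^2 + of_real f * of_real r2 + of_real e = of_real (r2^2 + f * r2 + e)" by simp
      also have "r2^2 + f * r2 + e = 0" unfolding fac by simp
      finally show ?thesis using rootq[of "of_real r2"] by simp
    qed
    have rp: "rpmax f e = r2" using 1 by (simp add: rpmax_def r2_def D_def)
    have rhs: "(\<exists>r::real. poly p r = 0 \<and> Re \<alpha> \<le> r) \<longleftrightarrow> c \<le> r2"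
    proof
      assume "\<exists>r::real. poly p r = 0 \<and> Re \<alpha> \<le> r"
      then obtain r where r: "poly p r = 0" "c \<le> r" by (auto simp: c_def)
      then have "(r - r1) * (r - r2) = 0" using qpos[of r] d unfolding fr' fac by simp
      then have "r \<le> r2" using r12 by auto
      then show "c \<le> r2" using r by linarith
    next
      assume "c \<le> r2"
      moreover have "poly p r2 = 0" unfolding fr' fac by simp
      ultimately show "\<exists>r::real. poly p r = 0 \<and> Re \<alpha> \<le> r" by (auto simp: c_def)
    qed
    show ?thesis
    proof (cases "c \<le> r2")
      case True
      have "hausdorff_moment_seq (\<lambda>n. 1 / ((real n - r1) * (real n - r2) * ((real n - c)^2 + d^2)))"
        by (rule suf_case[OF r12 r2neg True d])
      moreover have "(\<lambda>n. 1 / poly p (real n)) = (\<lambda>n. 1 / ((real n - r1) * (real n - r2) * ((real n - c)^2 + d^2)))"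
        by (simp add: fr' fac mult_ac)
      ultimately show ?thesis using rhs True by simp
    next
      case False
      have "\<not> hausdorff_moment_seq (\<lambda>n. 1 / (((real n - c)^2 + d^2) * ((real n)^2 + f * real n + e)))"
        by (rule gen_nec[OF c0 d]) (use False rp in simp)
      then show ?thesis using rhs False seq by simp
    qed
  next
    case 2
    have rhs: "\<not> (\<exists>r::real. poly p r = 0 \<and> Re \<alpha> \<le> r)"
    proof
      assume "\<exists>r::real. poly p r = 0 \<and> Re \<alpha> \<le> r"
      then obtain r where r: "poly p r = 0" by auto
      have "r^2 + f * r + e = (r + f / 2)^2 + (- D / 4)" by (simp add: D_def power2_eq_square field_simps)
      moreover have "(r + f / 2)^2 \<ge> 0" by simp
      ultimately have "r^2 + f * r + e > 0" using 2 by linarith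
      then show False using r qpos[of r] unfolding fr' by simp
    qed
    define c1 where "c1 = - f / 2"
    define d1 where "d1 = sqrt (- D) / 2"
    have d1: "d1 > 0" using 2 by (simp add: d1_def)
    have fac: "x^2 + f * x + e = (x - c1)^2 + d1^2" for x
    proof -
      have "(sqrt (- D))^2 = - D" using 2 by simp
      then show ?thesis by (simp add: c1_def d1_def D_def field_simps power2_eq_square, (simp add: algebra_simps)?)
    qed
    have c1neg: "c1 < 0"
    proof -
      have "(Complex c1 d1)^2 + of_real f * Complex c1 d1 + of_real e = 0"
      proof -
        have "d1^2 = e - c1^2" using fac[of 0] by simp
        then show ?thesis
          by (simp add: complex_eq_iff power2_eq_square c1_def algebra_simps)
      qed
      from rootq[OF this] show ?thesis by simp
    qed
    have rp: "rpmax f e = c1" using 2 by (simp add: rpmax_def c1_def D_def)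
    have seq2: "(\<lambda>n. 1 / poly p (real n)) = (\<lambda>n. 1 / (((real n - c)^2 + d^2) * ((real n - c1)^2 + d1^2)))"
      by (simp add: fr' fac)
    consider "c1 < c" | "c < c1" | "c1 = c" by linarith
    then show ?thesis
    proof cases
      case 1
      have "\<not> hausdorff_moment_seq (\<lambda>n. 1 / (((real n - c)^2 + d^2) * ((real n)^2 + f * real n + e)))"
        by (rule gen_nec[OF c0 d]) (use 1 rp in simp)
      then show ?thesis using rhs seq by simp
    next
      case 2
      have rp2: "rpmax (- 2 * c) (c^2 + d^2) = c"
      proof -
        have "(- 2 * c)^2 - 4 * (c^2 + d^2) = - 4 * d^2" by (simp add: power2_eq_square)
        then have "(- 2 * c)^2 - 4 * (c^2 + d^2) < 0" using d by simp
        then show ?thesis by (simp add: rpmax_def)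
      qed
      have "\<not> hausdorff_moment_seq (\<lambda>n. 1 / (((real n - c1)^2 + d1^2) * ((real n)^2 + (- 2 * c) * real n + (c^2 + d^2))))"
        by (rule gen_nec[OF c1neg d1]) (use 2 rp2 in simp)
      moreover have "(\<lambda>n. 1 / (((real n - c1)^2 + d1^2) * ((real n)^2 + (- 2 * c) * real n + (c^2 + d^2)))) = (\<lambda>n. 1 / poly p (real n))"
        unfolding seq2 by (simp add: power2_eq_square algebra_simps)
      ultimately show ?thesis using rhs by simp
    next
      case 3
      note cc = this
      consider "d1 = d" | "d1 < d" | "d < d1" by linarith
      then show ?thesis
      proof cases
        case 1
        have "\<not> hausdorff_moment_seq (\<lambda>n. 1 / (((real n - c)^2 + d^2) * ((real n - c)^2 + d^2)))"
          by (rule nec_v[OF c0 d])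
        then show ?thesis using rhs seq2 1 cc by simp
      next
        case 2
        have "\<not> hausdorff_moment_seq (\<lambda>n. 1 / (((real n - c)^2 + d1^2) * ((real n - c)^2 + d^2)))"
          by (rule nec_iv[OF c0 d1 2])
        moreover have "(\<lambda>n. 1 / (((real n - c)^2 + d1^2) * ((real n - c)^2 + d^2))) = (\<lambda>n. 1 / poly p (real n))"
          unfolding seq2 using cc by (simp add: mult.commute)
        ultimately show ?thesis using rhs by simp
      next
        case 3
        have "\<not> hausdorff_moment_seq (\<lambda>n. 1 / (((real n - c)^2 + d^2) * ((real n - c)^2 + d1^2)))"
          by (rule nec_iv[OF c0 d 3])
        then show ?thesis using rhs seq2 cc by simp
      qed
    qed
  qed
qed


end
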